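(* Let $G'\subseteq G$ be digraphs (i.e. $V(G')\subseteq V(G)$, $E(G')\subseteq E(G)$), let $f$ be a discrete Morse function on $G$ and $f'=f|_{V(G')}$. Then for each $n\ge0$, $\mathrm{Crit}_n(G)\cap P_n(G')\subseteq\mathrm{Crit}_n(G')$, where criticality in $G$ is with respect to $f$ and in $G'$ with respect to $f'$. Equivalently, every allowed elementary $n$-path of $G'$ that is critical in $G$ (for $f$) is critical in $G'$ (for $f'$).
   Context: A digraph $G=(V,E)$ consists of a set $V$ and $E\subseteq(V\times V)\setminus\{(v,v)\}$; $(u,v)\in E$ is written $u\to v$. An allowed elementary $n$-path is a sequence $v_0\cdots v_n$ of vertices with $v_{i-1}\to v_i\in E$ for $1\le i\le n$. Over a commutative ring $R$ with unit, $P_n(G)$ is the free $R$-module on the allowed elementary $n$-paths of $G$ and $\mathrm{Crit}_n(G)\subseteq P_n(G)$ is the submodule spanned by the critical ones. For allowed elementary paths, $\gamma'<\gamma$ (or $\gamma>\gamma'$) means $\gamma'$ is obtained from $\gamma$ by deleting some entries. A map $f:V\to[0,+\infty)$ is a discrete Morse function on $G$ if for every allowed elementary path $v_0\cdots v_n$: (i) there is at most one index $i$ with $f(v_i)=0$ such that $v_0\cdots v_{i-1}v_{i+1}\cdots v_n$ is an allowed elementary $(n-1)$-path; (ii) there is at most one vertex $u$ with $f(u)=0$ such that for some $-1\le j\le n$ the sequence $v_0\cdots v_juv_{j+1}\cdots v_n$ (meaning $uv_0\cdots v_n$ if $j=-1$, $v_0\cdots v_nu$ if $j=n$) is an allowed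 elementary $(n+1)$-path. (The restriction of a discrete Morse function to a subdigraph is a discrete Morse function.) Set $f(v_0\cdots v_n)=\sum_if(v_i)$. An allowed elementary $n$-path $\gamma$ is critical if there is no allowed elementary $(n-1)$-path $\beta<\gamma$ with $f(\beta)=f(\gamma)$ and no allowed elementary $(n+1)$-path $\alpha>\gamma$ with $f(\alpha)=f(\gamma)$. *)

theory Defs
  imports Complex_Main "HOL-Library.Sublist"
begin

definition digraph :: "'v set \<Rightarrow> ('v \<times> 'v) set \<Rightarrow> bool" where
  "digraph V E \<longleftrightarrow> E \<subseteq> (V \<times> V) - {(v, v) | v. True}"

definition subdigraph :: "'v set \<Rightarrow> ('v \<times> 'v) set \<Rightarrow> 'v set \<Rightarrow> ('v \<times> 'v) set \<Rightarrow> bool" where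
  "subdigraph V' E' V E \<longleftrightarrow> digraph V' E' \<and> digraph V E \<and> V' \<subseteq> V \<and> E' \<subseteq> E"

definition allowed_path :: "'v set \<Rightarrow> ('v \<times> 'v) set \<Rightarrow> 'v list \<Rightarrow> bool" where
  "allowed_path V E p \<longleftrightarrow> p \<noteq> [] \<and> set p \<subseteq> V \<and>
     (\<forall>i. Suc i < length p \<longrightarrow> (p ! i, p ! Suc i) \<in> E)"

definition allowed_npath :: "'v set \<Rightarrow> ('v \<times> 'v) set \<Rightarrow> nat \<Rightarrow> 'v list \<Rightarrow> bool" where
  "allowed_npath V E n p \<longleftrightarrow> allowed_path V E p \<and> length p = Suc n"

definition path_less :: "'v list \<Rightarrow> 'v list \<Rightarrow> bool" where
  "path_less q p \<longleftrightarrow> subseq q p \<and> length q < length p"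

definition del_at :: "nat \<Rightarrow> 'v list \<Rightarrow> 'v list" where
  "del_at i p = take i p @ drop (Suc i) p"

definition ins_at :: "nat \<Rightarrow> 'v \<Rightarrow> 'v list \<Rightarrow> 'v list" where
  "ins_at j u p = take j p @ u # drop j p"

definition discrete_morse :: "'v set \<Rightarrow> ('v \<times> 'v) set \<Rightarrow> ('v \<Rightarrow> real) \<Rightarrow> bool" where
  "discrete_morse V E f \<longleftrightarrow> (\<forall>v\<in>V. f v \<ge> 0) \<and>
     (\<forall>p. allowed_path V E p \<longrightarrow>
        (\<forall>i k. i < length p \<and> f (p ! i) = 0 \<and> allowed_path V E (del_at i p) \<and>
               k < length p \<and> f (p ! k) = 0 \<and> allowed_path V E (del_at k p) \<longrightarrow> i = k) \<and>
        (\<forall>u w. (f u = 0 \<and> (\<exists>j \<le> length p. allowed_path V E (ins_at j u p))) \<and>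
               (f w = 0 \<and> (\<exists>j \<le> length p. allowed_path V E (ins_at j w p))) \<longrightarrow> u = w))"

definition path_val :: "('v \<Rightarrow> real) \<Rightarrow> 'v list \<Rightarrow> real" where
  "path_val f p = (\<Sum>i<length p. f (p ! i))"

definition critical :: "'v set \<Rightarrow> ('v \<times> 'v) set \<Rightarrow> ('v \<Rightarrow> real) \<Rightarrow> nat \<Rightarrow> 'v list \<Rightarrow> bool" where
  "critical V E f n p \<longleftrightarrow> allowed_npath V E n p \<and>
     \<not> (\<exists>b. n \<ge> 1 \<and> allowed_npath V E (n - 1) b \<and> path_less b p \<and> path_val f b = path_val f p) \<and>
     \<not> (\<exists>a. allowed_npath V E (Suc n) a \<and> path_less p a \<and> path_val f a = path_val f p)"

text \<open>Free R-module on a set S of paths, realised as finitely supported coefficient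
  functions supported in S (= span of S inside the free module on all lists).\<close>
definition free_span :: "'v list set \<Rightarrow> ('v list \<Rightarrow> 'r::comm_ring_1) set" where
  "free_span S = {c. finite {p. c p \<noteq> 0} \<and> (\<forall>p. c p \<noteq> 0 \<longrightarrow> p \<in> S)}"

definition P_mod :: "'v set \<Rightarrow> ('v \<times> 'v) set \<Rightarrow> nat \<Rightarrow> ('v list \<Rightarrow> 'r::comm_ring_1) set" where
  "P_mod V E n = free_span {p. allowed_npath V E n p}"

definition Crit_mod :: "'v set \<Rightarrow> ('v \<times> 'v) set \<Rightarrow> ('v \<Rightarrow> real) \<Rightarrow> nat \<Rightarrow> ('v list \<Rightarrow> 'r::comm_ring_1) set" where
  "Crit_mod V E f n = free_span {p. critical V E f n p}"

end

theory Submission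
  imports Defs
begin

lemma ap_mono:
  assumes "subdigraph V' E' V E" "allowed_path V' E' p"
  shows "allowed_path V E p"
  using assms unfolding subdigraph_def allowed_path_def by blast

lemma anp_mono:
  assumes "subdigraph V' E' V E" "allowed_npath V' E' n p"
  shows "allowed_npath V E n p"
  using assms ap_mono unfolding allowed_npath_def by blast

lemma pv_restr:
  assumes "set p \<subseteq> V'"
  shows "path_val (\<lambda>v. if v \<in> V' then f v else 0) p = path_val f p"
  unfolding path_val_def
  by (rule sum.cong) (use assms nth_mem in auto)

lemma crit_restr:
  assumes "subdigraph V' E' V E" "allowed_npath V' E' n p" "critical V E f n p"
  shows "critical V' E' (\<lambda>v. if v \<in> V' then f v else 0) n p"
proof -
  have sp: "set p \<subseteq> V'" using assms(2) unfolding allowed_npath_def allowed_path_def by blast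
  have sv: "set q \<subseteq> V'" if "allowed_npath V' E' m q" for m q
    using that unfolding allowed_npath_def allowed_path_def by blast
  show ?thesis
    unfolding critical_def
  proof (intro conjI notI)
    show "allowed_npath V' E' n p" by fact
  next
    assume "\<exists>b. 1 \<le> n \<and> allowed_npath V' E' (n - 1) b \<and> path_less b p \<and>
        path_val (\<lambda>v. if v \<in> V' then f v else 0) b = path_val (\<lambda>v. if v \<in> V' then f v else 0) p"
    then obtain b where "1 \<le> n" "allowed_npath V' E' (n - 1) b" "path_less b p"
      "path_val (\<lambda>v. if v \<in> V' then f v else 0) b = path_val (\<lambda>v. if v \<in> V' then f v else 0) p"
      by blast
    then show False using assms(3) anp_mono[OF assms(1)] pv_restr sv sp
      unfolding critical_def by metis
  next
    assume "\<exists>a. allowed_npath V' E' (Suc n) a \<and> path_less p a \<and>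
        path_val (\<lambda>v. if v \<in> V' then f v else 0) a = path_val (\<lambda>v. if v \<in> V' then f v else 0) p"
    then obtain a where "allowed_npath V' E' (Suc n) a" "path_less p a"
      "path_val (\<lambda>v. if v \<in> V' then f v else 0) a = path_val (\<lambda>v. if v \<in> V' then f v else 0) p"
      by blast
    then show False using assms(3) anp_mono[OF assms(1)] pv_restr sv sp
      unfolding critical_def by metis
  qed
qed

theorem proposition4p2:
  fixes V V' :: "'v set" and E E' :: "('v \<times> 'v) set" and f :: "'v \<Rightarrow> real"
  assumes "subdigraph V' E' V E"
    and "discrete_morse V E f"
  shows "\<forall>n. (Crit_mod V E f n \<inter> P_mod V' E' n :: ('v list \<Rightarrow> 'r::comm_ring_1) set)
                \<subseteq> Crit_mod V' E' (\<lambda>v. if v \<in> V' then f v else 0) n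
           \<and> (\<forall>p. allowed_npath V' E' n p \<and> critical V E f n p
                  \<longrightarrow> critical V' E' (\<lambda>v. if v \<in> V' then f v else 0) n p)"
  using crit_restr[OF assms(1)]
  unfolding Crit_mod_def P_mod_def free_span_def by blast

end
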